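(* Let $\mathcal M$ and $\mathcal N$ be quantum channels that satisfy $s$-detailed balance with respect to $\rho_\beta$ (for a fixed $s\in[0,1]$). Suppose $\mathcal N$ has $\rho_\beta$ as its unique fixed point and its spectrum is contained in $[0,1]$. Then $\mathrm{gap}(\mathcal M\circ\mathcal N\circ\mathcal M)\ge \mathrm{gap}(\mathcal N)$.
   Context: Let $H$ be a Hermitian operator on $n$ qubits, $\beta>0$, $\rho_\beta=e^{-\beta H}/\operatorname{tr}(e^{-\beta H})$. A quantum channel is a CPTP map $\mathcal T(X)=\sum_uK_uXK_u^\dagger$ with dual $\mathcal T^\dagger(X)=\sum_uK_u^\dagger XK_u$ (the adjoint w.r.t. $\operatorname{tr}(A^\dagger B)$). For $s\in[0,1]$, $\langle A,B\rangle_s=\operatorname{tr}(A^\dagger\rho_\beta^{1-s}B\rho_\beta^s)$. A map $\mathcal T$ satisfies $s$-detailed balance w.r.t. $\rho_\beta$ if $\langle A,\mathcal T^\dagger(B)\rangle_s=\langle\mathcal T^\dagger(A),B\rangle_s$ for all matrices $A,B$. Spectrum means the set of eigenvalues of the channel as a linear map on matrices. For a channel $\mathcal T$ satisfying $s$-detailed balance, $\mathrm{gap}(\mathcal T):=1-\max_{X\ne0,\ \langle X,I\rangle_s=0}\frac{\langle X,\mathcal T^\dagger(X)\rangle_s}{\langle X,X\rangle_s}$. *)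

theory Defs
  imports "HOL-Analysis.Analysis"
begin

type_synonym 'd cmat = "complex^'d^'d"

definition cadj :: "'d::finite cmat \<Rightarrow> 'd cmat" where
  "cadj A = (\<chi> i j. cnj (A $ j $ i))"

definition csmult :: "complex \<Rightarrow> 'd::finite cmat \<Rightarrow> 'd cmat" where
  "csmult c A = (\<chi> i j. c * A $ i $ j)"

definition hermitian :: "'d::finite cmat \<Rightarrow> bool" where
  "hermitian A \<longleftrightarrow> cadj A = A"

primrec mpow :: "'d::finite cmat \<Rightarrow> nat \<Rightarrow> 'd cmat" where
  "mpow A 0 = mat 1"
| "mpow A (Suc k) = A ** mpow A k"

definition mexp :: "'d::finite cmat \<Rightarrow> 'd cmat" where
  "mexp A = (\<Sum>k. csmult (of_real (1 / fact k)) (mpow A k))"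

definition partition_fn :: "'d::finite cmat \<Rightarrow> real \<Rightarrow> complex" where
  "partition_fn H \<beta> = trace (mexp (csmult (of_real (- \<beta>)) H))"

definition gibbs :: "'d::finite cmat \<Rightarrow> real \<Rightarrow> 'd cmat" where
  "gibbs H \<beta> = csmult (1 / partition_fn H \<beta>) (mexp (csmult (of_real (- \<beta>)) H))"

text \<open>Real power rho_beta^t of the Gibbs state (t real):
  rho_beta^t = e^{-t beta H} / tr(e^{-beta H})^t, computed via the spectral calculus
  (partition_fn is a positive real number for Hermitian H).\<close>

definition gibbs_pow :: "'d::finite cmat \<Rightarrow> real \<Rightarrow> real \<Rightarrow> 'd cmat" where
  "gibbs_pow H \<beta> t =
     csmult (of_real (1 / (Re (partition_fn H \<beta>)) powr t))
            (mexp (csmult (of_real (- t * \<beta>)) H))"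

definition kraus_map :: "'d::finite cmat list \<Rightarrow> 'd cmat \<Rightarrow> 'd cmat" where
  "kraus_map Ks X = (\<Sum>K\<leftarrow>Ks. K ** X ** cadj K)"

definition quantum_channel :: "('d::finite cmat \<Rightarrow> 'd cmat) \<Rightarrow> bool" where
  "quantum_channel T \<longleftrightarrow>
     (\<exists>Ks. T = kraus_map Ks \<and> (\<Sum>K\<leftarrow>Ks. cadj K ** K) = mat 1)"

definition hs_inner :: "'d::finite cmat \<Rightarrow> 'd cmat \<Rightarrow> complex" where
  "hs_inner A B = trace (cadj A ** B)"

definition dual :: "('d::finite cmat \<Rightarrow> 'd cmat) \<Rightarrow> ('d cmat \<Rightarrow> 'd cmat)" where
  "dual T = (THE S. \<forall>A B. hs_inner A (T B) = hs_inner (S A) B)"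

definition s_inner :: "'d::finite cmat \<Rightarrow> real \<Rightarrow> real \<Rightarrow> 'd cmat \<Rightarrow> 'd cmat \<Rightarrow> complex" where
  "s_inner H \<beta> s A B =
     trace (cadj A ** gibbs_pow H \<beta> (1 - s) ** B ** gibbs_pow H \<beta> s)"

definition detailed_balance ::
  "'d::finite cmat \<Rightarrow> real \<Rightarrow> real \<Rightarrow> ('d cmat \<Rightarrow> 'd cmat) \<Rightarrow> bool" where
  "detailed_balance H \<beta> s T \<longleftrightarrow>
     (\<forall>A B. s_inner H \<beta> s A (dual T B) = s_inner H \<beta> s (dual T A) B)"

definition spectrum_map :: "('d::finite cmat \<Rightarrow> 'd cmat) \<Rightarrow> complex set" where
  "spectrum_map T = {c. \<exists>X. X \<noteq> 0 \<and> T X = csmult c X}"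

definition density_matrix :: "'d::finite cmat \<Rightarrow> bool" where
  "density_matrix \<sigma> \<longleftrightarrow> hermitian \<sigma> \<and> trace \<sigma> = 1 \<and>
     (\<forall>v. 0 \<le> Re (\<Sum>i\<in>UNIV. \<Sum>j\<in>UNIV. cnj (v $ i) * \<sigma> $ i $ j * v $ j))"

definition unique_fixed_point :: "('d::finite cmat \<Rightarrow> 'd cmat) \<Rightarrow> 'd cmat \<Rightarrow> bool" where
  "unique_fixed_point T \<rho> \<longleftrightarrow> T \<rho> = \<rho> \<and>
     (\<forall>\<sigma>. density_matrix \<sigma> \<and> T \<sigma> = \<sigma> \<longrightarrow> \<sigma> = \<rho>)"

text \<open>The quotient is real under detailed balance; we take its real part.
  The maximum is rendered as a supremum (it is attained).\<close>

definition gap :: "'d::finite cmat \<Rightarrow> real \<Rightarrow> real \<Rightarrow> ('d cmat \<Rightarrow> 'd cmat) \<Rightarrow> real" where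
  "gap H \<beta> s T = 1 - Sup {Re (s_inner H \<beta> s X (dual T X) / s_inner H \<beta> s X X) | X.
                              X \<noteq> 0 \<and> s_inner H \<beta> s X (mat 1) = 0}"

end

theory Submission
  imports Defs
begin

lemma cadj_nth[simp]: "cadj A $ i $ j = cnj (A $ j $ i)"
  by (simp add: cadj_def)
lemma csmult_nth[simp]: "csmult c A $ i $ j = c * A $ i $ j"
  by (simp add: csmult_def)
lemma mmult_nth: "(A ** B) $ i $ j = (\<Sum>k\<in>UNIV. A $ i $ k * B $ k $ j)"
  by (simp add: matrix_matrix_mult_def)

lemma cadj_cadj[simp]: "cadj (cadj A) = A"
  by (simp add: vec_eq_iff)
lemma cadj_mult: "cadj (A ** B) = cadj B ** cadj A"
  by (simp add: vec_eq_iff mmult_nth mult.commute)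
lemma cadj_add: "cadj (A + B) = cadj A + cadj B"
  by (simp add: vec_eq_iff)
lemma cadj_mat1[simp]: "cadj (mat 1 :: complex^'d::finite^'d) = mat 1"
  by (simp add: vec_eq_iff mat_def)
lemma cadj_csmult: "cadj (csmult c A) = csmult (cnj c) (cadj A)"
  by (simp add: vec_eq_iff)
lemma csmult_mult_left: "csmult c A ** B = csmult c (A ** B)"
  by (simp add: vec_eq_iff mmult_nth sum_distrib_left mult.assoc)
lemma csmult_mult_right: "A ** csmult c B = csmult c (A ** B)"
  by (simp add: vec_eq_iff mmult_nth sum_distrib_left mult.assoc mult.left_commute)
lemma csmult_csmult[simp]: "csmult a (csmult b A) = csmult (a*b) A"
  by (simp add: vec_eq_iff mult.assoc)
lemma csmult_one[simp]: "csmult 1 A = A"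
  by (simp add: vec_eq_iff)
lemma csmult_zero[simp]: "csmult 0 A = 0" "csmult c 0 = 0"
  by (simp_all add: vec_eq_iff)
lemma csmult_add: "csmult c (A + B) = csmult c A + csmult c B"
  by (simp add: vec_eq_iff algebra_simps)
lemma csmult_diff: "csmult c (A - B) = csmult c A - csmult c B"
  by (simp add: vec_eq_iff algebra_simps)
lemma csmult_of_real: "csmult (of_real r) A = r *\<^sub>R A"
  by (simp add: vec_eq_iff complex_eq_iff)

lemma hs_inner_sum: "hs_inner A B = (\<Sum>i\<in>UNIV. \<Sum>j\<in>UNIV. cnj (A $ i $ j) * B $ i $ j)"
  unfolding hs_inner_def trace_def by (simp add: mmult_nth) (rule sum.swap)

lemma Re_hs_inner: "Re (hs_inner A B) = inner A B"
  unfolding hs_inner_sum inner_vec_def inner_complex_def Re_sum by simp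

lemma hs_inner_self: "hs_inner A A = of_real ((norm A)^2)"
proof -
  have "hs_inner A A = (\<Sum>i\<in>UNIV. \<Sum>j\<in>UNIV. of_real ((cmod (A $ i $ j))^2))"
    unfolding hs_inner_sum
  proof (intro sum.cong refl)
    fix i j show "cnj (A $ i $ j) * A $ i $ j = of_real ((cmod (A $ i $ j))^2)"
      by (metis complex_norm_square mult.commute)
  qed
  also have "\<dots> = of_real (\<Sum>i\<in>UNIV. (norm (A $ i))^2)"
    by (simp add: norm_vec_def L2_set_def sum_nonneg)
  also have "\<dots> = of_real ((norm A)^2)"
    by (simp add: norm_vec_def L2_set_def sum_nonneg)
  finally show ?thesis .
qed

lemma hs_inner_add_right: "hs_inner A (B + C) = hs_inner A B + hs_inner A C"
  by (simp add: hs_inner_sum algebra_simps sum.distrib)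
lemma hs_inner_diff_right: "hs_inner A (B - C) = hs_inner A B - hs_inner A C"
  by (simp add: hs_inner_sum algebra_simps sum_subtractf)
lemma hs_inner_add_left: "hs_inner (A + B) C = hs_inner A C + hs_inner B C"
  by (simp add: hs_inner_sum algebra_simps sum.distrib)
lemma hs_inner_diff_left: "hs_inner (A - B) C = hs_inner A C - hs_inner B C"
  by (simp add: hs_inner_sum algebra_simps sum_subtractf)
lemma hs_inner_csmult_right: "hs_inner A (csmult c B) = c * hs_inner A B"
  by (simp add: hs_inner_sum sum_distrib_left algebra_simps)
lemma hs_inner_csmult_left: "hs_inner (csmult c A) B = cnj c * hs_inner A B"
  by (simp add: hs_inner_sum sum_distrib_left algebra_simps)
lemma hs_inner_zero[simp]: "hs_inner 0 A = 0" "hs_inner A 0 = 0"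
  by (simp_all add: hs_inner_sum)

lemma hs_inner_mult: "hs_inner A (B ** C) = hs_inner (A ** cadj C) B"
  unfolding hs_inner_def
  by (metis cadj_mult cadj_cadj matrix_mul_assoc trace_mul_sym)
lemma hs_inner_mult2: "hs_inner A (B ** C) = hs_inner (cadj B ** A) C"
  unfolding hs_inner_def
  by (metis cadj_mult cadj_cadj matrix_mul_assoc)

lemma hs_inner_eq0: "hs_inner A A = 0 \<longleftrightarrow> A = 0"
  by (simp add: hs_inner_self)

lemma hs_inner_ext: assumes "\<And>B. hs_inner A B = hs_inner A' B" shows "A = A'"
proof -
  have "hs_inner (A - A') (A - A') = 0"
    using assms[of "A - A'"] by (simp add: hs_inner_diff_left)
  thus ?thesis by (simp add: hs_inner_eq0)
qed

lemma matrix_add_rdistrib': "(A + B) ** (C::complex^'d::finite^'d) = A ** C + B ** C"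
  by (simp add: vec_eq_iff mmult_nth algebra_simps sum.distrib)
lemma matrix_diff_ldistrib': "(C::complex^'d::finite^'d) ** (A - B) = C ** A - C ** B"
  by (simp add: vec_eq_iff mmult_nth algebra_simps sum_subtractf)
lemma matrix_diff_rdistrib': "(A - B) ** (C::complex^'d::finite^'d) = A ** C - B ** C"
  by (simp add: vec_eq_iff mmult_nth algebra_simps sum_subtractf)
lemma matrix_scaleR_left': "(r *\<^sub>R A) ** (C::complex^'d::finite^'d) = r *\<^sub>R (A ** C)"
  by (metis scalar_matrix_assoc)
lemma matrix_scaleR_right': "C ** (r *\<^sub>R A) = r *\<^sub>R ((C::complex^'d::finite^'d) ** A)"
  by (metis scalar_matrix_assoc matrix_scalar_ac)

lemma kraus_map_Nil[simp]: "kraus_map [] X = 0"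
  by (simp add: kraus_map_def)
lemma kraus_map_Cons[simp]: "kraus_map (K # Ks) X = K ** X ** cadj K + kraus_map Ks X"
  by (simp add: kraus_map_def)

lemma kraus_dual_rel:
  "hs_inner A (kraus_map Ks B) = hs_inner (kraus_map (map cadj Ks) A) B"
proof (induction Ks)
  case Nil thus ?case by simp
next
  case (Cons K Ks)
  have "hs_inner A (K ** B ** cadj K) = hs_inner (A ** K) (K ** B)"
    using hs_inner_mult[of A "K ** B" "cadj K"] by simp
  also have "\<dots> = hs_inner (cadj K ** A ** K) B"
    using hs_inner_mult2[of "A ** K" K B] by (simp add: matrix_mul_assoc)
  finally have "hs_inner A (K ** B ** cadj K) = hs_inner (cadj K ** A ** K) B" .
  thus ?case using Cons by (simp add: hs_inner_add_right hs_inner_add_left)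
qed

lemma dual_unique:
  assumes "\<And>A B. hs_inner A (T B) = hs_inner (S A) B"
  shows "dual T = S"
  unfolding dual_def
proof (rule the_equality)
  show "\<forall>A B. hs_inner A (T B) = hs_inner (S A) B" using assms by blast
next
  fix S' assume h: "\<forall>A B. hs_inner A (T B) = hs_inner (S' A) B"
  show "S' = S"
  proof
    fix A show "S' A = S A"
      by (rule hs_inner_ext) (metis h assms)
  qed
qed

lemma dual_kraus: "dual (kraus_map Ks) = kraus_map (map cadj Ks)"
  by (rule dual_unique) (rule kraus_dual_rel)

lemma kraus_add: "kraus_map Ks (X + Y) = kraus_map Ks X + kraus_map Ks Y"
  by (induction Ks) (simp_all add: matrix_add_ldistrib matrix_add_rdistrib' algebra_simps)
lemma kraus_scaleR: "kraus_map Ks (r *\<^sub>R X) = r *\<^sub>R kraus_map Ks X"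
  by (induction Ks) (simp_all add: matrix_scaleR_left' matrix_scaleR_right' algebra_simps)
lemma kraus_csmult: "kraus_map Ks (csmult c X) = csmult c (kraus_map Ks X)"
  by (induction Ks) (simp_all add: csmult_mult_left csmult_mult_right csmult_add)
lemma kraus_linear: "linear (kraus_map Ks)"
  by (rule linearI) (simp_all add: kraus_add kraus_scaleR)

lemma kraus_unital:
  assumes "(\<Sum>K\<leftarrow>Ks. cadj K ** K) = mat 1"
  shows "kraus_map (map cadj Ks) (mat 1) = mat 1"
proof -
  have "kraus_map (map cadj Ks) (mat 1) = (\<Sum>K\<leftarrow>Ks. cadj K ** K)"
    by (induction Ks) simp_all
  thus ?thesis using assms by simp
qed

lemma channel_dual:
  assumes "quantum_channel T"
  shows "\<exists>Ks. T = kraus_map Ks \<and> dual T = kraus_map (map cadj Ks) \<and>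
      (\<Sum>K\<leftarrow>Ks. cadj K ** K) = mat 1"
  using assms unfolding quantum_channel_def by (auto simp: dual_kraus)

lemma dual_comp:
  assumes "\<And>A B. hs_inner A (T1 B) = hs_inner (S1 A) B"
    and "\<And>A B. hs_inner A (T2 B) = hs_inner (S2 A) B"
  shows "dual (T1 \<circ> T2) = S2 \<circ> S1"
  by (rule dual_unique) (simp add: assms)

lemma dual_rel: "quantum_channel T \<Longrightarrow> hs_inner A (T B) = hs_inner (dual T A) B"
  using channel_dual kraus_dual_rel by metis

lemma dual_comp3:
  assumes "quantum_channel M" "quantum_channel N"
  shows "dual (M \<circ> N \<circ> M) = dual M \<circ> dual N \<circ> dual M"
proof -
  have "dual (M \<circ> N) = dual N \<circ> dual M"
    by (rule dual_comp) (use assms dual_rel in auto)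
  have "\<And>A B. hs_inner A ((M \<circ> N) B) = hs_inner ((dual N \<circ> dual M) A) B"
    by (simp add: dual_rel[OF assms(1)] dual_rel[OF assms(2)])
  hence "dual ((M \<circ> N) \<circ> M) = dual M \<circ> (dual N \<circ> dual M)"
    by (rule dual_comp) (use assms dual_rel in auto)
  thus ?thesis by (simp add: o_assoc)
qed

lemma mpow_csmult: "mpow (csmult a H) k = csmult (a^k) (mpow H k)"
  by (induction k) (simp_all add: csmult_mult_left csmult_mult_right mult.commute)

lemma mpow_add: "mpow H (i + j) = mpow H i ** mpow H j"
  by (induction i) (simp_all add: matrix_mul_assoc)

lemma mpow_comm: "mpow H k ** H = H ** mpow H k"
  using mpow_add[of H k 1] mpow_add[of H 1 k] by (simp add: add.commute)

lemma cadj_mpow: "hermitian H \<Longrightarrow> cadj (mpow H k) = mpow H k"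
  by (induction k) (simp_all add: cadj_mult hermitian_def mpow_comm)

definition msize :: "complex^'d::finite^'d \<Rightarrow> real" where
  "msize H = (\<Sum>i\<in>UNIV. \<Sum>j\<in>UNIV. cmod (H $ i $ j))"

lemma msize_nonneg: "0 \<le> msize H"
  unfolding msize_def by (intro sum_nonneg) auto

lemma row_le_msize: "(\<Sum>l\<in>UNIV. cmod (H $ i $ l)) \<le> msize H"
  unfolding msize_def
  by (rule member_le_sum[where f="\<lambda>i. \<Sum>l\<in>UNIV. cmod (H $ i $ l)"]) (auto intro: sum_nonneg)

lemma mpow_entry_bound: "cmod (mpow H k $ i $ j) \<le> msize H ^ k"
proof (induction k arbitrary: i j)
  case 0 thus ?case by (simp add: mat_def)
next
  case (Suc k)
  have "cmod (mpow H (Suc k) $ i $ j) = cmod (\<Sum>l\<in>UNIV. H $ i $ l * mpow H k $ l $ j)"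
    by (simp add: mmult_nth)
  also have "\<dots> \<le> (\<Sum>l\<in>UNIV. cmod (H $ i $ l) * cmod (mpow H k $ l $ j))"
    by (rule order_trans[OF norm_sum]) (simp add: norm_mult)
  also have "\<dots> \<le> (\<Sum>l\<in>UNIV. cmod (H $ i $ l) * msize H ^ k)"
    by (intro sum_mono mult_left_mono Suc.IH) auto
  also have "\<dots> = (\<Sum>l\<in>UNIV. cmod (H $ i $ l)) * msize H ^ k"
    by (simp add: sum_distrib_right)
  also have "\<dots> \<le> msize H * msize H ^ k"
    by (intro mult_right_mono row_le_msize) (simp add: msize_nonneg)
  finally show ?case by simp
qed

definition eser :: "complex \<Rightarrow> complex^'d::finite^'d \<Rightarrow> 'd \<Rightarrow> 'd \<Rightarrow> nat \<Rightarrow> complex" where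
  "eser a H i j k = (a^k / fact k) * mpow H k $ i $ j"

lemma eser_norm_summable: "summable (\<lambda>k. norm (eser a H i j k))"
proof (rule summable_comparison_test)
  show "summable (\<lambda>k. inverse (fact k) * (cmod a * msize H)^k)"
    by (rule summable_exp)
  show "\<exists>N. \<forall>n\<ge>N. norm (norm (eser a H i j n)) \<le> inverse (fact n) * (cmod a * msize H)^n"
  proof (intro exI allI impI)
    fix n
    have "norm (norm (eser a H i j n)) = cmod a ^ n / fact n * cmod (mpow H n $ i $ j)"
      by (simp add: eser_def norm_mult norm_divide norm_power)
    also have "\<dots> \<le> cmod a ^ n / fact n * msize H ^ n"
      by (intro mult_left_mono mpow_entry_bound) auto
    also have "\<dots> = inverse (fact n) * (cmod a * msize H)^n"
      by (simp add: power_mult_distrib divide_inverse)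
    finally show "norm (norm (eser a H i j n)) \<le> inverse (fact n) * (cmod a * msize H)^n" .
  qed
qed

lemma eser_summable: "summable (eser a H i j)"
  using eser_norm_summable summable_norm_cancel by blast

lemma mexp_sums: "(\<lambda>k. csmult (of_real (1 / fact k)) (mpow (csmult a H) k)) sums
   (\<chi> i j. suminf (eser a H i j))"
  unfolding sums_def
proof (rule vec_tendstoI, rule vec_tendstoI)
  fix i j
  have "(\<lambda>n. (\<Sum>k<n. csmult (of_real (1 / fact k)) (mpow (csmult a H) k)) $ i $ j)
      = (\<lambda>n. \<Sum>k<n. eser a H i j k)"
    by (simp add: mpow_csmult eser_def)
  moreover have "(\<lambda>n. \<Sum>k<n. eser a H i j k) \<longlonglongrightarrow> suminf (eser a H i j)"
    using eser_summable summable_LIMSEQ by blast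
  ultimately show "((\<lambda>n. (\<Sum>k<n. csmult (of_real (1 / fact k)) (mpow (csmult a H) k)) $ i $ j)
      \<longlongrightarrow> (\<chi> i j. suminf (eser a H i j)) $ i $ j) sequentially"
    by simp
qed

lemma mexp_entry: "mexp (csmult a H) $ i $ j = suminf (eser a H i j)"
  using mexp_sums[of a H] unfolding mexp_def by (simp add: sums_iff)

lemma mexp_entry_sums: "eser a H i j sums (mexp (csmult a H) $ i $ j)"
  using mexp_entry eser_summable summable_sums by metis

lemma mexp_add: "mexp (csmult a H) ** mexp (csmult b H) = mexp (csmult (a + b) H)"
proof -
  have "\<And>i j. (mexp (csmult a H) ** mexp (csmult b H)) $ i $ j = mexp (csmult (a + b) H) $ i $ j"
  proof -
    fix i j
    have cp: "\<And>m. (\<lambda>k. \<Sum>p\<le>k. eser a H i m p * eser b H m j (k - p)) sums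
        (mexp (csmult a H) $ i $ m * mexp (csmult b H) $ m $ j)"
      unfolding mexp_entry by (rule Cauchy_product_sums) (rule eser_norm_summable)+
    have s1: "(\<lambda>k. \<Sum>m\<in>UNIV. \<Sum>p\<le>k. eser a H i m p * eser b H m j (k - p)) sums
        ((mexp (csmult a H) ** mexp (csmult b H)) $ i $ j)"
      unfolding mmult_nth by (rule sums_sum) (rule cp)
    have eq: "(\<Sum>m\<in>UNIV. \<Sum>p\<le>k. eser a H i m p * eser b H m j (k - p)) = eser (a + b) H i j k" for k
    proof -
      have "(\<Sum>m\<in>UNIV. \<Sum>p\<le>k. eser a H i m p * eser b H m j (k - p))
          = (\<Sum>p\<le>k. (a^p / fact p) * (b^(k-p) / fact (k-p)) *
               (\<Sum>m\<in>UNIV. mpow H p $ i $ m * mpow H (k-p) $ m $ j))"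
        by (subst sum.swap) (simp add: eser_def sum_distrib_left mult_ac)
      also have "\<dots> = (\<Sum>p\<le>k. (a^p / fact p) * (b^(k-p) / fact (k-p)) * mpow H k $ i $ j)"
      proof (rule sum.cong[OF refl])
        fix p assume "p \<in> {..k}"
        hence "mpow H k = mpow H p ** mpow H (k - p)" using mpow_add[of H p "k-p"] by simp
        thus "(a^p / fact p) * (b^(k-p) / fact (k-p)) *
               (\<Sum>m\<in>UNIV. mpow H p $ i $ m * mpow H (k-p) $ m $ j)
             = (a^p / fact p) * (b^(k-p) / fact (k-p)) * mpow H k $ i $ j"
          by (simp add: mmult_nth)
      qed
      also have "\<dots> = ((a + b)^k / fact k) * mpow H k $ i $ j"
      proof -
        have "(a + b)^k / fact k = (\<Sum>p\<le>k. (a^p / fact p) * (b^(k-p) / fact (k-p)))"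
        proof -
          have "(a + b)^k / fact k = (\<Sum>p\<le>k. of_nat (k choose p) * a ^ p * b ^ (k - p)) / fact k"
            by (simp add: binomial_ring)
          also have "\<dots> = (\<Sum>p\<le>k. of_nat (k choose p) * a ^ p * b ^ (k - p) / fact k)"
            by (simp add: sum_divide_distrib)
          also have "\<dots> = (\<Sum>p\<le>k. (a^p / fact p) * (b^(k-p) / fact (k-p)))"
          proof (rule sum.cong[OF refl])
            fix p assume "p \<in> {..k}"
            hence pk: "p \<le> k" by simp
            have "(of_nat (k choose p) :: complex) = fact k / (fact p * fact (k - p))"
              using binomial_fact[OF pk] by simp
            thus "of_nat (k choose p) * a ^ p * b ^ (k - p) / fact k = (a^p / fact p) * (b^(k-p) / fact (k-p))"
              by (simp add: field_simps)
          qed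
          finally show ?thesis .
        qed
        thus ?thesis by (simp add: sum_distrib_right)
      qed
      finally show ?thesis by (simp add: eser_def)
    qed
    have "(\<lambda>k. eser (a + b) H i j k) sums ((mexp (csmult a H) ** mexp (csmult b H)) $ i $ j)"
      using s1 eq by simp
    thus "(mexp (csmult a H) ** mexp (csmult b H)) $ i $ j = mexp (csmult (a + b) H) $ i $ j"
      using mexp_entry_sums sums_unique2 by blast
  qed
  thus ?thesis by (simp add: vec_eq_iff)
qed

lemma mexp_zero: "mexp (csmult 0 H) = mat 1"
proof -
  have "\<And>i j. mexp (csmult 0 H) $ i $ j = mat 1 $ i $ j"
  proof -
    fix i j
    have "(\<lambda>k. (mpow H k $ i $ j / fact k) * 0^k) sums (mpow H 0 $ i $ j / fact 0)"
      by (rule powser_sums_zero)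
    moreover have "(\<lambda>k. (mpow H k $ i $ j / fact k) * 0^k) = eser 0 H i j"
      by (auto simp: eser_def fun_eq_iff)
    ultimately have "eser 0 H i j sums (mat 1 $ i $ j)" by simp
    thus "mexp (csmult 0 H) $ i $ j = mat 1 $ i $ j"
      using mexp_entry_sums sums_unique2 by blast
  qed
  thus ?thesis by (simp add: vec_eq_iff)
qed

lemma mexp_hermitian:
  assumes "hermitian H"
  shows "cadj (mexp (csmult (of_real r) H)) = mexp (csmult (of_real r) H)"
proof -
  have "\<And>i j. cnj (mexp (csmult (of_real r) H) $ j $ i) = mexp (csmult (of_real r) H) $ i $ j"
  proof -
    fix i j
    have "(\<lambda>k. cnj (eser (of_real r) H j i k)) sums cnj (mexp (csmult (of_real r) H) $ j $ i)"
      using mexp_entry_sums sums_cnj by blast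
    moreover have "(\<lambda>k. cnj (eser (of_real r) H j i k)) = eser (of_real r) H i j"
    proof
      fix k
      have "cnj (mpow H k $ j $ i) = mpow H k $ i $ j"
        using cadj_mpow[OF assms, of k] by (metis cadj_nth)
      thus "cnj (eser (of_real r) H j i k) = eser (of_real r) H i j k"
        by (simp add: eser_def)
    qed
    ultimately show "cnj (mexp (csmult (of_real r) H) $ j $ i) = mexp (csmult (of_real r) H) $ i $ j"
      using mexp_entry_sums sums_unique2 by metis
  qed
  thus ?thesis by (simp add: vec_eq_iff)
qed

lemma inner_cvec: "inner (x::complex^'d::finite) y = Re (\<Sum>i\<in>UNIV. cnj (x$i) * y$i)"
  by (simp add: inner_vec_def inner_complex_def Re_sum)

lemma inner_cadj: "inner w (cadj K *v z) = inner (K *v w) (z::complex^'d::finite)"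
proof -
  have "(\<Sum>i\<in>UNIV. cnj (w$i) * (\<Sum>j\<in>UNIV. cnj (K$j$i) * z$j))
      = (\<Sum>j\<in>UNIV. cnj (\<Sum>i\<in>UNIV. K$j$i * w$i) * z$j)"
    by (simp add: sum_distrib_left sum_distrib_right mult_ac) (rule sum.swap)
  thus ?thesis by (simp add: inner_cvec matrix_vector_mult_def)
qed

lemma norm_le_l1_gen: "norm x \<le> (\<Sum>i\<in>UNIV. norm (x $ i))"
  by (simp add: norm_vec_def L2_set_le_sum)

definition opb :: "complex^'d::finite^'d \<Rightarrow> real \<Rightarrow> bool" where
  "opb X c \<longleftrightarrow> (\<forall>v. norm (X *v v) \<le> c * norm v)"

lemma kraus_mv: "kraus_map (map cadj Ks) X *v v = (\<Sum>K\<leftarrow>Ks. cadj K *v (X *v (K *v v)))"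
  by (induction Ks) (simp_all add: matrix_vector_mult_add_rdistrib matrix_vector_mul_assoc matrix_mul_assoc)

lemma kraus_norms: "(\<Sum>K\<leftarrow>Ks. inner v ((cadj K ** K) *v v)) = inner v ((\<Sum>K\<leftarrow>Ks. cadj K ** K) *v v)"
  by (induction Ks) (simp_all add: matrix_vector_mult_add_rdistrib inner_add_right)

lemma kraus_norms2:
  assumes "(\<Sum>K\<leftarrow>Ks. cadj K ** K) = mat 1"
  shows "(\<Sum>K\<leftarrow>Ks. (norm (K *v v))^2) = (norm v)^2"
proof -
  have "\<And>K. (norm (K *v v))^2 = inner v ((cadj K ** K) *v v)"
    by (simp add: power2_norm_eq_inner inner_cadj matrix_vector_mul_assoc[symmetric])
  hence "(\<Sum>K\<leftarrow>Ks. (norm (K *v v))^2) = (\<Sum>K\<leftarrow>Ks. inner v ((cadj K ** K) *v v))" by simp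
  also have "\<dots> = (norm v)^2" using assms by (simp add: kraus_norms power2_norm_eq_inner)
  finally show ?thesis .
qed

lemma inner_sum_list_right: "inner w (\<Sum>K\<leftarrow>Ks. f K) = (\<Sum>K\<leftarrow>Ks. inner w (f K))"
  by (induction Ks) (simp_all add: inner_add_right)

lemma sum_list_amgm:
  fixes a b :: "'k \<Rightarrow> real"
  assumes "t > 0"
  shows "(\<Sum>K\<leftarrow>Ks. a K * b K) \<le> (t * (\<Sum>K\<leftarrow>Ks. (a K)^2) + (\<Sum>K\<leftarrow>Ks. (b K)^2) / t) / 2"
proof (induction Ks)
  case Nil thus ?case by simp
next
  case (Cons K Ks)
  have "a K * b K \<le> (t * (a K)^2 + (b K)^2 / t) / 2"
  proof -
    have "0 \<le> (t * a K - b K)^2" by simp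
    hence "2 * t * (a K * b K) \<le> t^2 * (a K)^2 + (b K)^2"
      by (simp add: power2_eq_square algebra_simps)
    hence "a K * b K \<le> (t^2 * (a K)^2 + (b K)^2) / (2 * t)"
      using assms by (simp add: pos_le_divide_eq mult_ac)
    also have "\<dots> = (t * (a K)^2 + (b K)^2 / t) / 2"
      using assms by (simp add: field_simps power2_eq_square)
    finally show ?thesis .
  qed
  hence "a K * b K + (\<Sum>K\<leftarrow>Ks. a K * b K) \<le>
     (t * (a K)^2 + (b K)^2 / t) / 2 + (t * (\<Sum>K\<leftarrow>Ks. (a K)^2) + (\<Sum>K\<leftarrow>Ks. (b K)^2) / t) / 2"
    using Cons by linarith
  also have "\<dots> = (t * ((a K)^2 + (\<Sum>K\<leftarrow>Ks. (a K)^2)) + ((b K)^2 + (\<Sum>K\<leftarrow>Ks. (b K)^2)) / t) / 2"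
    by (simp add: add_divide_distrib distrib_left)
  finally show ?case by simp
qed

lemma kraus_opb:
  assumes unit: "(\<Sum>K\<leftarrow>Ks. cadj K ** K) = mat 1" and X: "opb X c" and c: "c \<ge> 0"
  shows "opb (kraus_map (map cadj Ks) X) c"
  unfolding opb_def
proof
  fix v
  define w where "w = kraus_map (map cadj Ks) X *v v"
  show "norm (kraus_map (map cadj Ks) X *v v) \<le> c * norm v"
  proof (cases "w = 0 \<or> v = 0")
    case True
    thus ?thesis using c unfolding w_def by auto
  next
    case False
    hence wp: "norm w > 0" and vp: "norm v > 0" by auto
    define t where "t = norm v / norm w"
    have tp: "t > 0" using wp vp by (simp add: t_def)
    have "(norm w)^2 = inner w w" by (simp add: power2_norm_eq_inner)
    also have "\<dots> = inner w (kraus_map (map cadj Ks) X *v v)" by (simp add: w_def)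
    also have "\<dots> = (\<Sum>K\<leftarrow>Ks. inner (K *v w) (X *v (K *v v)))"
      by (simp only: kraus_mv inner_sum_list_right inner_cadj)
    also have "\<dots> \<le> (\<Sum>K\<leftarrow>Ks. norm (K *v w) * (c * norm (K *v v)))"
    proof (rule sum_list_mono)
      fix K
      have "inner (K *v w) (X *v (K *v v)) \<le> norm (K *v w) * norm (X *v (K *v v))"
        by (rule norm_cauchy_schwarz)
      also have "\<dots> \<le> norm (K *v w) * (c * norm (K *v v))"
        using X unfolding opb_def by (intro mult_left_mono) auto
      finally show "inner (K *v w) (X *v (K *v v)) \<le> norm (K *v w) * (c * norm (K *v v))" .
    qed
    also have "\<dots> = c * (\<Sum>K\<leftarrow>Ks. norm (K *v w) * norm (K *v v))"
      by (simp add: sum_list_const_mult mult_ac)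
    also have "\<dots> \<le> c * ((t * (\<Sum>K\<leftarrow>Ks. (norm (K *v w))^2) + (\<Sum>K\<leftarrow>Ks. (norm (K *v v))^2) / t) / 2)"
      by (intro mult_left_mono sum_list_amgm tp c)
    also have "\<dots> = c * ((t * (norm w)^2 + (norm v)^2 / t) / 2)"
      using unit by (simp add: kraus_norms2)
    also have "\<dots> = c * norm v * norm w"
      using wp vp by (simp add: t_def field_simps power2_eq_square)
    finally have "norm w * norm w \<le> (c * norm v) * norm w" by (simp add: power2_eq_square)
    hence "norm w \<le> c * norm v" using wp by simp
    thus ?thesis by (simp add: w_def)
  qed
qed

lemma opb_msize: "opb (X::complex^'d::finite^'d) (msize X)"
  unfolding opb_def
proof
  fix v :: "complex^'d"
  have "norm (X *v v) \<le> (\<Sum>i\<in>UNIV. norm ((X *v v) $ i))" by (rule norm_le_l1_gen)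
  also have "\<dots> \<le> (\<Sum>i\<in>UNIV. \<Sum>j\<in>UNIV. cmod (X $ i $ j) * norm v)"
  proof (rule sum_mono)
    fix i
    have "norm ((X *v v) $ i) \<le> (\<Sum>j\<in>UNIV. cmod (X $ i $ j) * cmod (v $ j))"
      unfolding matrix_vector_mult_def by (simp add: norm_mult order_trans[OF norm_sum])
    also have "\<dots> \<le> (\<Sum>j\<in>UNIV. cmod (X $ i $ j) * norm v)"
      by (intro sum_mono mult_left_mono) (auto simp: Finite_Cartesian_Product.norm_nth_le)
    finally show "norm ((X *v v) $ i) \<le> (\<Sum>j\<in>UNIV. cmod (X $ i $ j) * norm v)" .
  qed
  also have "\<dots> = msize X * norm v" by (simp add: msize_def sum_distrib_right)
  finally show "norm (X *v v) \<le> msize X * norm v" .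
qed

lemma msize_le_norm: "msize X \<le> real (CARD('d)) * real (CARD('d)) * norm (X :: complex^'d::finite^'d)"
proof -
  have "msize X \<le> (\<Sum>i\<in>(UNIV::'d set). \<Sum>j\<in>(UNIV::'d set). norm X)"
    unfolding msize_def
    by (intro sum_mono) (rule order_trans[OF Finite_Cartesian_Product.norm_nth_le Finite_Cartesian_Product.norm_nth_le])
  thus ?thesis by simp
qed

lemma norm_axis_c: "norm (axis (j::'d::finite) (1::complex)) = 1"
proof -
  have "(\<Sum>i\<in>UNIV. (norm (axis j (1::complex) $ i))^2) = (\<Sum>i\<in>UNIV. if i = j then 1 else (0::real))"
    by (rule sum.cong) (auto simp: axis_def)
  also have "\<dots> = 1" by simp
  finally show ?thesis unfolding norm_vec_def L2_set_def by simp
qed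

lemma norm_le_opb:
  assumes "opb (Y :: complex^'d::finite^'d) c"
  shows "norm Y \<le> real (CARD('d)) * real (CARD('d)) * c"
proof -
  have ent: "cmod (Y $ i $ j) \<le> c" for i j
  proof -
    have "(Y *v axis j 1) $ i = Y $ i $ j"
      by (simp add: matrix_vector_mult_def axis_def if_distrib if_distribR sum.delta' cong: if_cong)
    moreover have "cmod ((Y *v axis j 1) $ i) \<le> norm (Y *v axis j 1)"
      by (rule Finite_Cartesian_Product.norm_nth_le)
    ultimately have "cmod (Y $ i $ j) \<le> norm (Y *v axis j 1)" by simp
    also have "\<dots> \<le> c * norm (axis j (1::complex))" using assms unfolding opb_def by blast
    finally show ?thesis by (simp add: norm_axis_c)
  qed
  have "norm Y \<le> (\<Sum>i\<in>UNIV. norm (Y $ i))" by (rule norm_le_l1_gen)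
  also have "\<dots> \<le> (\<Sum>i\<in>(UNIV::'d set). \<Sum>j\<in>(UNIV::'d set). c)"
  proof (rule sum_mono)
    fix i
    have "norm (Y $ i) \<le> (\<Sum>j\<in>UNIV. norm (Y $ i $ j))" by (rule norm_le_l1_gen)
    also have "\<dots> \<le> (\<Sum>j\<in>(UNIV::'d set). c)" by (intro sum_mono ent)
    finally show "norm (Y $ i) \<le> (\<Sum>j\<in>(UNIV::'d set). c)" .
  qed
  finally show ?thesis by simp
qed

lemma kraus_power_bound:
  assumes unit: "(\<Sum>K\<leftarrow>Ks. cadj K ** K) = mat 1"
  shows "norm ((kraus_map (map cadj Ks) ^^ k) Y) \<le>
     (real (CARD('d)) * real (CARD('d)))^2 * norm (Y :: complex^'d::finite^'d)"
proof -
  have "opb ((kraus_map (map cadj Ks) ^^ k) Y) (msize Y)"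
  proof (induction k)
    case 0 thus ?case by (simp add: opb_msize)
  next
    case (Suc k) thus ?case using kraus_opb[OF unit _ msize_nonneg] by simp
  qed
  hence "norm ((kraus_map (map cadj Ks) ^^ k) Y) \<le> real (CARD('d)) * real (CARD('d)) * msize Y"
    by (rule norm_le_opb)
  also have "\<dots> \<le> real (CARD('d)) * real (CARD('d)) * (real (CARD('d)) * real (CARD('d)) * norm Y)"
    by (intro mult_left_mono msize_le_norm) auto
  finally show ?thesis by (simp add: power2_eq_square mult_ac)
qed

lemma quad_nonpos_lin0:
  fixes a b :: real
  assumes "\<And>t. 2 * t * a + t^2 * b \<le> 0"
  shows "a = 0"
proof (rule ccontr)
  assume "a \<noteq> 0"
  define c where "c = \<bar>b\<bar> + 1"
  have c: "c > 0" "c \<ge> 1" by (auto simp: c_def)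
  have h: "2 * (a / c) * a + (a / c)^2 * b \<le> 0" by (rule assms)
  have "2 * (a / c) * a + (a / c)^2 * b = a^2 * (2 * c + b) / c^2"
    using c by (simp add: field_simps power2_eq_square)
  moreover have "a^2 * (2 * c + b) / c^2 > 0"
    using c \<open>a \<noteq> 0\<close> by (intro divide_pos_pos mult_pos_pos) (auto simp: c_def)
  ultimately show False using h by linarith
qed

lemma eig_max:
  fixes S :: "'a::euclidean_space \<Rightarrow> 'a"
  assumes lin: "linear S" and sym: "\<And>x y. inner (S x) y = inner x (S y)"
    and sub: "subspace W" and inv: "\<And>x. x \<in> W \<Longrightarrow> S x \<in> W"
    and ne: "w \<in> W" "w \<noteq> 0"
  shows "\<exists>u\<in>W. norm u = 1 \<and> S u = inner u (S u) *\<^sub>R u \<and>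
           (\<forall>v\<in>W. inner v (S v) \<le> inner u (S u) * (norm v)^2)"
proof -
  define K where "K = W \<inter> sphere 0 1"
  have cK: "compact K" unfolding K_def
    using closed_Int_compact[OF closed_subspace[OF sub] compact_sphere] by simp
  have w1: "w /\<^sub>R norm w \<in> K" unfolding K_def using ne sub
    by (simp add: subspace_scale)
  have bl: "bounded_linear S" using lin linear_conv_bounded_linear by blast
  have cont: "continuous_on K (\<lambda>v. inner v (S v))"
    by (intro continuous_intros linear_continuous_on bl)
  obtain u where uK: "u \<in> K" and umax: "\<And>v. v \<in> K \<Longrightarrow> inner v (S v) \<le> inner u (S u)"
    using compact_attains_sup[OF compact_continuous_image[OF cont cK]] w1 by fastforce
  define mu where "mu = inner u (S u)"
  have uW: "u \<in> W" and un: "norm u = 1" using uK by (auto simp: K_def)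
  have allv: "inner v (S v) \<le> mu * (norm v)^2" if vW: "v \<in> W" for v
  proof (cases "v = 0")
    case True thus ?thesis by (simp add: linear_0[OF lin])
  next
    case False
    have "v /\<^sub>R norm v \<in> K" unfolding K_def using False vW sub
      by (simp add: subspace_scale)
    hence "inner (v /\<^sub>R norm v) (S (v /\<^sub>R norm v)) \<le> mu" using umax mu_def by blast
    hence "inner v (S v) / (norm v)^2 \<le> mu"
      by (simp add: linear_scale[OF lin] power2_eq_square divide_inverse mult_ac)
    thus ?thesis using False by (simp add: divide_le_eq mult.commute)
  qed
  have orth: "inner x (S u - mu *\<^sub>R u) = 0" if xW: "x \<in> W" for x
  proof -
    have "2 * t * inner x (S u - mu *\<^sub>R u) + t^2 * (inner x (S x) - mu * (norm x)^2) \<le> 0" for t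
    proof -
      have "u + t *\<^sub>R x \<in> W" using uW xW sub by (simp add: subspace_add subspace_scale)
      hence h: "inner (u + t *\<^sub>R x) (S (u + t *\<^sub>R x)) \<le> mu * (norm (u + t *\<^sub>R x))^2"
        by (rule allv)
      have e1: "inner (u + t *\<^sub>R x) (S (u + t *\<^sub>R x)) =
          mu + 2 * t * inner x (S u) + t^2 * inner x (S x)"
        using sym[of x u] by (simp add: linear_add[OF lin] linear_scale[OF lin] inner_add inner_commute
            mu_def power2_eq_square algebra_simps)
      have e2: "(norm (u + t *\<^sub>R x))^2 = 1 + 2 * t * inner x u + t^2 * (norm x)^2"
      proof -
        have uu: "inner u u = 1" using un by (metis power2_norm_eq_inner one_power2)
        show ?thesis unfolding power2_norm_eq_inner
          using uu by (simp add: inner_add inner_commute power2_eq_square algebra_simps)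
      qed
      show ?thesis using h unfolding e1 e2 by (simp add: inner_diff_right algebra_simps)
    qed
    thus ?thesis by (rule quad_nonpos_lin0)
  qed
  have "S u - mu *\<^sub>R u \<in> W" using uW inv sub by (simp add: subspace_diff subspace_scale)
  hence "inner (S u - mu *\<^sub>R u) (S u - mu *\<^sub>R u) = 0" by (rule orth)
  hence "S u = mu *\<^sub>R u" by simp
  thus ?thesis using uW un allv mu_def by blast
qed

lemma sym_contraction:
  fixes L :: "'a::euclidean_space \<Rightarrow> 'a"
  assumes lin: "linear L" and sym: "\<And>x y. inner (L x) y = inner x (L y)"
    and pb: "\<And>k v. norm ((L ^^ k) v) \<le> C * norm v"
  shows "norm (L v) \<le> norm v"
proof -
  obtain b :: 'a where b: "b \<in> Basis" using nonempty_Basis by blast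
  hence b0: "b \<noteq> 0" by auto
  have lin2: "linear (L \<circ> L)" using lin by (simp add: linear_compose)
  have sym2: "\<And>x y. inner ((L \<circ> L) x) y = inner x ((L \<circ> L) y)" using sym by simp
  obtain u where un: "norm u = 1" and ueig: "(L \<circ> L) u = inner u ((L \<circ> L) u) *\<^sub>R u"
     and umax: "\<And>v. inner v ((L \<circ> L) v) \<le> inner u ((L \<circ> L) u) * (norm v)^2"
    using eig_max[OF lin2 sym2 subspace_UNIV _ UNIV_I b0] by blast
  define lam where "lam = inner u ((L \<circ> L) u)"
  have lam_eq: "lam = (norm (L u))^2" unfolding lam_def using sym[of u "L u"]
    by (simp add: power2_norm_eq_inner)
  have pow: "(L ^^ (2 * k)) u = lam ^ k *\<^sub>R u" for k
  proof (induction k)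
    case 0 thus ?case by simp
  next
    case (Suc k)
    have "(L ^^ (2 * Suc k)) u = L (L ((L ^^ (2 * k)) u))"
      by (simp add: funpow_swap1)
    also have "\<dots> = lam ^ k *\<^sub>R L (L u)" using Suc by (simp add: linear_scale[OF lin])
    also have "\<dots> = lam ^ Suc k *\<^sub>R u"
    proof -
      have "L (L u) = lam *\<^sub>R u" using ueig lam_def by simp
      thus ?thesis by (simp add: mult.commute)
    qed
    finally show ?case .
  qed
  have lam_le: "lam \<le> 1"
  proof (rule ccontr)
    assume "\<not> lam \<le> 1"
    hence "1 < lam" by simp
    then obtain k where k: "C < lam ^ k" using real_arch_pow by blast
    have "norm ((L ^^ (2 * k)) u) = lam ^ k"
      using pow[of k] un \<open>1 < lam\<close> by simp
    with pb[of "2 * k" u] un k show False by simp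
  qed
  have "(norm (L v))^2 = inner v ((L \<circ> L) v)" using sym[of v "L v"]
    by (simp add: power2_norm_eq_inner)
  also have "\<dots> \<le> lam * (norm v)^2" using umax lam_def by simp
  also have "\<dots> \<le> (norm v)^2" using lam_le lam_eq by (simp add: mult_left_le_one_le)
  finally show ?thesis by (simp add: power2_le_iff_abs_le)
qed

lemma trace_csmult: "trace (csmult c A) = c * trace A"
  by (simp add: trace_def sum_distrib_left)

lemma mat1_neq0: "(mat 1 :: complex^'d::finite^'d) \<noteq> 0"
proof
  assume "(mat 1 :: complex^'d::finite^'d) = 0"
  hence "(mat 1 :: complex^'d::finite^'d) $ undefined $ undefined = 0" by simp
  thus False by (simp add: mat_def)
qed

locale gsetup =
  fixes H :: "complex^'d::finite^'d" and \<beta> s :: real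
  assumes herm: "hermitian H"
begin

definition G :: "real \<Rightarrow> complex^'d^'d" where
  "G r = mexp (csmult (of_real r) H)"

lemma G_add: "G a ** G b = G (a + b)"
  unfolding G_def by (simp add: mexp_add)

lemma G_zero: "G 0 = mat 1"
  unfolding G_def using mexp_zero by simp

lemma G_herm: "cadj (G r) = G r"
  unfolding G_def using mexp_hermitian[OF herm] by simp

lemma G_inv: "G r ** G (- r) = mat 1" "G (- r) ** G r = mat 1"
  by (simp_all add: G_add G_zero)

lemma G_neq0: "G r \<noteq> 0"
  using G_inv(1)[of r] mat1_neq0 by force

definition Zr :: real where "Zr = Re (partition_fn H \<beta>)"

lemma Zr_pos: "Zr > 0"
proof -
  have "partition_fn H \<beta> = trace (G (- \<beta>))" by (simp add: partition_fn_def G_def)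
  also have "G (- \<beta>) = cadj (G (- \<beta> / 2)) ** G (- \<beta> / 2)" by (simp add: G_herm G_add)
  finally have "partition_fn H \<beta> = hs_inner (G (- \<beta> / 2)) (G (- \<beta> / 2))"
    by (simp add: hs_inner_def)
  hence "Zr = (norm (G (- \<beta> / 2)))^2" by (simp add: Zr_def hs_inner_self)
  thus ?thesis using G_neq0 by simp
qed

definition pp :: real where "pp = 1 / Zr powr (1 - s)"
definition qq :: real where "qq = 1 / Zr powr s"

lemma pq_pos: "pp > 0" "qq > 0"
  using Zr_pos by (simp_all add: pp_def qq_def)

definition Am where "Am = G (- (1 - s) * \<beta> / 2)"
definition Bm where "Bm = G (- s * \<beta> / 2)"
definition Ai where "Ai = G ((1 - s) * \<beta> / 2)"
definition Bi where "Bi = G (s * \<beta> / 2)"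

definition J :: "complex^'d^'d \<Rightarrow> complex^'d^'d" where "J X = Am ** X ** Bm"
definition Ji :: "complex^'d^'d \<Rightarrow> complex^'d^'d" where "Ji X = Ai ** X ** Bi"

lemma J_Ji[simp]: "J (Ji X) = X"
proof -
  have "Am ** Ai = mat 1" "Bi ** Bm = mat 1" unfolding Am_def Ai_def Bm_def Bi_def
    using G_inv by (metis minus_divide_left mult_minus_left)+
  moreover have "Am ** (Ai ** X ** Bi) ** Bm = (Am ** Ai) ** X ** (Bi ** Bm)"
    by (simp add: matrix_mul_assoc)
  ultimately show ?thesis by (simp add: J_def Ji_def)
qed

lemma Ji_J[simp]: "Ji (J X) = X"
proof -
  have "Ai ** Am = mat 1" "Bm ** Bi = mat 1" unfolding Am_def Ai_def Bm_def Bi_def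
    using G_inv by (metis minus_divide_left mult_minus_left)+
  moreover have "Ai ** (Am ** X ** Bm) ** Bi = (Ai ** Am) ** X ** (Bm ** Bi)"
    by (simp add: matrix_mul_assoc)
  ultimately show ?thesis by (simp add: J_def Ji_def)
qed

lemma gibbs_pow_eq:
  "gibbs_pow H \<beta> (1 - s) = csmult (of_real pp) (Am ** Am)"
  "gibbs_pow H \<beta> s = csmult (of_real qq) (Bm ** Bm)"
proof -
  have "Am ** Am = G (- (1 - s) * \<beta>)" unfolding Am_def G_add
    by (intro arg_cong[where f=G]) (simp add: field_simps)
  thus "gibbs_pow H \<beta> (1 - s) = csmult (of_real pp) (Am ** Am)"
    unfolding gibbs_pow_def G_def[symmetric] pp_def Zr_def by simp
  have "Bm ** Bm = G (- s * \<beta>)" unfolding Bm_def G_add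
    by (intro arg_cong[where f=G]) (simp add: field_simps)
  thus "gibbs_pow H \<beta> s = csmult (of_real qq) (Bm ** Bm)"
    unfolding gibbs_pow_def G_def[symmetric] qq_def Zr_def by simp
qed

lemma s_inner_J: "s_inner H \<beta> s X Y = of_real (pp * qq) * hs_inner (J X) (J Y)"
proof -
  have hA: "cadj Am = Am" and hB: "cadj Bm = Bm" by (simp_all add: Am_def Bm_def G_herm)
  have "s_inner H \<beta> s X Y = of_real pp * of_real qq * trace (cadj X ** Am ** Am ** Y ** Bm ** Bm)"
    unfolding s_inner_def gibbs_pow_eq
    by (simp add: csmult_mult_left csmult_mult_right trace_csmult matrix_mul_assoc)
  also have "trace (cadj X ** Am ** Am ** Y ** Bm ** Bm) = trace (Bm ** (cadj X ** Am ** Am ** Y ** Bm))"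
    by (rule trace_mul_sym)
  also have "\<dots> = hs_inner (J X) (J Y)"
    unfolding hs_inner_def J_def by (simp add: cadj_mult hA hB matrix_mul_assoc)
  finally show ?thesis by simp
qed

lemma J_add: "J (X + Y) = J X + J Y" and J_scaleR: "J (r *\<^sub>R X) = r *\<^sub>R J X"
  and J_csmult: "J (csmult c X) = csmult c (J X)"
  by (simp_all add: J_def matrix_add_ldistrib matrix_add_rdistrib' matrix_scaleR_left' matrix_scaleR_right'
      csmult_mult_left csmult_mult_right)

lemma Ji_add: "Ji (X + Y) = Ji X + Ji Y" and Ji_scaleR: "Ji (r *\<^sub>R X) = r *\<^sub>R Ji X"
  by (simp_all add: Ji_def matrix_add_ldistrib matrix_add_rdistrib' matrix_scaleR_left' matrix_scaleR_right')

lemma J_linear: "linear J" by (rule linearI) (simp_all add: J_add J_scaleR)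
lemma Ji_linear: "linear Ji" by (rule linearI) (simp_all add: Ji_add Ji_scaleR)

lemma s_inner_self: "s_inner H \<beta> s X X = of_real (pp * qq * (norm (J X))^2)"
  by (simp add: s_inner_J hs_inner_self)

end

lemma csmult_scaleR: "csmult c (r *\<^sub>R X) = r *\<^sub>R csmult c X"
  by (simp add: vec_eq_iff)

lemma spec_dual:
  assumes ch: "quantum_channel T" and ev: "dual T X = csmult c X" and X0: "X \<noteq> 0"
  shows "cnj c \<in> spectrum_map T"
proof (rule ccontr)
  assume nsp: "cnj c \<notin> spectrum_map T"
  obtain Ks where TK: "T = kraus_map Ks" using ch unfolding quantum_channel_def by blast
  define D where "D Y = T Y - csmult (cnj c) Y" for Y
  have lin: "linear D" unfolding D_def TK
    by (rule linearI) (simp_all add: kraus_add kraus_scaleR csmult_add csmult_scaleR scaleR_diff_right)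
  have inj: "inj D"
  proof (rule injI)
    fix x y assume "D x = D y"
    hence "D (x - y) = 0" using linear_diff[OF lin] by simp
    hence "T (x - y) = csmult (cnj c) (x - y)" by (simp add: D_def)
    hence "x - y = 0" using nsp unfolding spectrum_map_def by blast
    thus "x = y" by simp
  qed
  have "surj D" by (rule linear_injective_imp_surjective[OF lin inj]) simp
  then obtain B where B: "D B = X" by (metis surjE)
  have "hs_inner X X = hs_inner X (T B - csmult (cnj c) B)"
    using B by (simp add: D_def)
  also have "\<dots> = hs_inner X (T B) - cnj c * hs_inner X B"
    by (simp add: hs_inner_diff_right hs_inner_csmult_right)
  also have "hs_inner X (T B) = hs_inner (dual T X) B" by (rule dual_rel[OF ch])
  finally have "hs_inner X X = 0" by (simp add: ev hs_inner_csmult_left)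
  thus False using X0 by (simp add: hs_inner_eq0)
qed

context gsetup
begin

definition LT :: "(complex^'d^'d \<Rightarrow> complex^'d^'d) \<Rightarrow> complex^'d^'d \<Rightarrow> complex^'d^'d" where
  "LT T u = J (dual T (Ji u))"

definition e1 where "e1 = J (mat 1)"
definition e2 where "e2 = J (csmult \<i> (mat 1))"
definition WW where "WW = {u. inner u e1 = 0 \<and> inner u e2 = 0}"

lemma WW_subspace: "subspace WW"
  unfolding subspace_def WW_def by (simp add: inner_add_left)

lemma LT_linear: assumes "quantum_channel T" shows "linear (LT T)"
proof -
  obtain Ks where d: "dual T = kraus_map (map cadj Ks)" using channel_dual[OF assms] by blast
  have "LT T = J \<circ> kraus_map (map cadj Ks) \<circ> Ji" by (simp add: fun_eq_iff LT_def d)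
  moreover have "linear (J \<circ> kraus_map (map cadj Ks) \<circ> Ji)"
    using linear_compose[OF Ji_linear linear_compose[OF kraus_linear J_linear]] by simp
  ultimately show ?thesis by simp
qed

lemma LT_sym:
  assumes "detailed_balance H \<beta> s T"
  shows "inner (LT T x) y = inner x (LT T y)"
proof -
  have "s_inner H \<beta> s (Ji x) (dual T (Ji y)) = s_inner H \<beta> s (dual T (Ji x)) (Ji y)"
    using assms unfolding detailed_balance_def by blast
  hence "of_real (pp * qq) * hs_inner x (LT T y) = of_real (pp * qq) * hs_inner (LT T x) y"
    by (simp add: s_inner_J LT_def)
  hence "hs_inner x (LT T y) = hs_inner (LT T x) y" using pq_pos by simp
  hence "Re (hs_inner x (LT T y)) = Re (hs_inner (LT T x) y)" by simp
  thus ?thesis by (simp add: Re_hs_inner)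
qed

lemma LT_fix:
  assumes "quantum_channel T"
  shows "LT T e1 = e1" "LT T e2 = e2"
proof -
  obtain Ks where d: "dual T = kraus_map (map cadj Ks)" and u: "(\<Sum>K\<leftarrow>Ks. cadj K ** K) = mat 1"
    using channel_dual[OF assms] by blast
  show "LT T e1 = e1" by (simp add: LT_def e1_def d kraus_unital[OF u])
  show "LT T e2 = e2" by (simp add: LT_def e2_def d kraus_csmult kraus_unital[OF u])
qed

lemma LT_WW:
  assumes "quantum_channel T" "detailed_balance H \<beta> s T" "u \<in> WW"
  shows "LT T u \<in> WW"
  using assms LT_sym[OF assms(2)] LT_fix[OF assms(1)] unfolding WW_def by simp

lemma constraint_iff: "s_inner H \<beta> s X (mat 1) = 0 \<longleftrightarrow> J X \<in> WW"
proof -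
  have "s_inner H \<beta> s X (mat 1) = 0 \<longleftrightarrow> hs_inner (J X) e1 = 0"
    using pq_pos by (simp add: s_inner_J e1_def)
  also have "\<dots> \<longleftrightarrow> Re (hs_inner (J X) e1) = 0 \<and> Im (hs_inner (J X) e1) = 0"
    by (simp add: complex_eq_iff)
  also have "Im (hs_inner (J X) e1) = - Re (hs_inner (J X) e2)"
    by (simp add: e2_def e1_def J_csmult hs_inner_csmult_right)
  finally show ?thesis by (simp add: WW_def Re_hs_inner)
qed

lemma value_eq:
  "Re (s_inner H \<beta> s X (dual T X) / s_inner H \<beta> s X X) =
     inner (J X) (LT T (J X)) / (norm (J X))^2"
proof -
  have "s_inner H \<beta> s X (dual T X) / s_inner H \<beta> s X X =
      (of_real (pp * qq) * hs_inner (J X) (LT T (J X))) / (of_real (pp * qq) * of_real ((norm (J X))^2))"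
    by (simp add: s_inner_J LT_def hs_inner_self)
  also have "\<dots> = hs_inner (J X) (LT T (J X)) / of_real ((norm (J X))^2)"
    using pq_pos by (simp add: field_simps)
  finally show ?thesis by (simp add: Re_hs_inner)
qed

lemma gapset:
  "{Re (s_inner H \<beta> s X (dual T X) / s_inner H \<beta> s X X) | X. X \<noteq> 0 \<and> s_inner H \<beta> s X (mat 1) = 0}
   = (\<lambda>u. inner u (LT T u) / (norm u)^2) ` (WW - {0})"
proof (intro set_eqI iffI)
  fix r assume "r \<in> {Re (s_inner H \<beta> s X (dual T X) / s_inner H \<beta> s X X) | X. X \<noteq> 0 \<and> s_inner H \<beta> s X (mat 1) = 0}"
  then obtain X where X: "X \<noteq> 0" "s_inner H \<beta> s X (mat 1) = 0"
     and r: "r = Re (s_inner H \<beta> s X (dual T X) / s_inner H \<beta> s X X)" by blast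
  have "J X \<noteq> 0" using X(1) by (metis Ji_J linear_0[OF Ji_linear])
  moreover have "J X \<in> WW" using X(2) constraint_iff by blast
  ultimately show "r \<in> (\<lambda>u. inner u (LT T u) / (norm u)^2) ` (WW - {0})"
    using r value_eq by blast
next
  fix r assume "r \<in> (\<lambda>u. inner u (LT T u) / (norm u)^2) ` (WW - {0})"
  then obtain u where u: "u \<in> WW" "u \<noteq> 0" and r: "r = inner u (LT T u) / (norm u)^2" by blast
  have "Ji u \<noteq> 0" using u(2) by (metis J_Ji linear_0[OF J_linear])
  moreover have "s_inner H \<beta> s (Ji u) (mat 1) = 0" using u(1) constraint_iff by simp
  moreover have "r = Re (s_inner H \<beta> s (Ji u) (dual T (Ji u)) / s_inner H \<beta> s (Ji u) (Ji u))"
    using r value_eq[of "Ji u" T] by simp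
  ultimately show "r \<in> {Re (s_inner H \<beta> s X (dual T X) / s_inner H \<beta> s X X) | X. X \<noteq> 0 \<and> s_inner H \<beta> s X (mat 1) = 0}"
    by blast
qed

lemma LT_comp:
  assumes "quantum_channel M" "quantum_channel N"
  shows "LT (M \<circ> N \<circ> M) = LT M \<circ> LT N \<circ> LT M"
  by (simp add: fun_eq_iff LT_def dual_comp3[OF assms])

lemma LT_pow: "(LT T ^^ k) u = J ((dual T ^^ k) (Ji u))"
  by (induction k) (simp_all add: LT_def)

lemma LT_contr:
  assumes ch: "quantum_channel M" and db: "detailed_balance H \<beta> s M"
  shows "norm (LT M v) \<le> norm v"
proof -
  obtain Ks where d: "dual M = kraus_map (map cadj Ks)" and u: "(\<Sum>K\<leftarrow>Ks. cadj K ** K) = mat 1"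
    using channel_dual[OF ch] by blast
  obtain KJ where KJp: "KJ > 0" and KJ: "\<And>x. norm (J x) \<le> norm x * KJ"
    using bounded_linear.pos_bounded[OF J_linear[unfolded linear_conv_bounded_linear]] by blast
  obtain KJi where KJi: "KJi > 0" "\<And>x. norm (Ji x) \<le> norm x * KJi"
    using bounded_linear.pos_bounded[OF Ji_linear[unfolded linear_conv_bounded_linear]] by blast
  define D where "D = (real (CARD('d)) * real (CARD('d)))^2"
  have D: "D \<ge> 0" by (simp add: D_def)
  have pb: "norm ((LT M ^^ k) x) \<le> (D * KJi * KJ) * norm x" for k x
  proof -
    have "norm ((LT M ^^ k) x) \<le> norm ((dual M ^^ k) (Ji x)) * KJ"
      unfolding LT_pow by (rule KJ)
    also have "\<dots> \<le> (D * norm (Ji x)) * KJ"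
      using kraus_power_bound[OF u, of k "Ji x"] KJp
      by (intro mult_right_mono) (simp_all add: d D_def)
    also have "\<dots> \<le> (D * (norm x * KJi)) * KJ"
      using KJp D KJi
      by (intro mult_right_mono mult_left_mono) simp_all
    finally show ?thesis by (simp add: mult_ac)
  qed
  show ?thesis
    by (rule sym_contraction[OF LT_linear[OF ch] LT_sym[OF db] pb])
qed

end

theorem lemma4p2:
  fixes H :: "complex^'d^'d" and n :: nat and \<beta> s :: real
    and \<M> \<N> :: "complex^'d^'d \<Rightarrow> complex^'d^'d"
  assumes "CARD('d) = 2 ^ n"
    and "hermitian H"
    and "\<beta> > 0"
    and "0 \<le> s" and "s \<le> 1"
    and "quantum_channel \<M>" and "quantum_channel \<N>"
    and "detailed_balance H \<beta> s \<M>" and "detailed_balance H \<beta> s \<N>"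
    and "unique_fixed_point \<N> (gibbs H \<beta>)"
    and "spectrum_map \<N> \<subseteq> complex_of_real ` {0..1}"
  shows "gap H \<beta> s (\<M> \<circ> \<N> \<circ> \<M>) \<ge> gap H \<beta> s \<N>"
proof -
  interpret g: gsetup H \<beta> s using assms(2) by unfold_locales
  note chM = assms(6) and chN = assms(7) and dbM = assms(8) and dbN = assms(9)
  define LM where "LM = g.LT \<M>"
  define LN where "LN = g.LT \<N>"
  have gapM: "gap H \<beta> s (\<M> \<circ> \<N> \<circ> \<M>) =
      1 - Sup ((\<lambda>u. inner u (LM (LN (LM u))) / (norm u)^2) ` (g.WW - {0}))"
    unfolding gap_def g.gapset g.LT_comp[OF chM chN] LM_def LN_def by simp
  have gapN: "gap H \<beta> s \<N> = 1 - Sup ((\<lambda>u. inner u (LN u) / (norm u)^2) ` (g.WW - {0}))"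
    unfolding gap_def g.gapset LN_def by simp
  show ?thesis
  proof (cases "g.WW - {0} = {}")
    case True
    show ?thesis unfolding gapM gapN True image_empty by simp
  next
    case False
    then obtain w where w: "w \<in> g.WW" "w \<noteq> 0" by blast
    have linN: "linear LN" unfolding LN_def by (rule g.LT_linear[OF chN])
    have symN: "\<And>x y. inner (LN x) y = inner x (LN y)" unfolding LN_def by (rule g.LT_sym[OF dbN])
    have symM: "\<And>x y. inner (LM x) y = inner x (LM y)" unfolding LM_def by (rule g.LT_sym[OF dbM])
    have WN: "\<And>x. x \<in> g.WW \<Longrightarrow> LN x \<in> g.WW" unfolding LN_def by (rule g.LT_WW[OF chN dbN])
    have WM: "\<And>x. x \<in> g.WW \<Longrightarrow> LM x \<in> g.WW" unfolding LM_def by (rule g.LT_WW[OF chM dbM])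
    have contr: "\<And>v. norm (LM v) \<le> norm v" unfolding LM_def by (rule g.LT_contr[OF chM dbM])
    obtain u where uW: "u \<in> g.WW" and un: "norm u = 1" and ueig: "LN u = inner u (LN u) *\<^sub>R u"
      and umax: "\<And>v. v \<in> g.WW \<Longrightarrow> inner v (LN v) \<le> inner u (LN u) * (norm v)^2"
      using eig_max[OF linN symN g.WW_subspace WN w] by blast
    define mu where "mu = inner u (LN u)"
    have mu_nonneg: "mu \<ge> 0"
    proof -
      have "g.J (dual \<N> (g.Ji u)) = mu *\<^sub>R u" using ueig by (simp add: mu_def LN_def g.LT_def)
      hence "dual \<N> (g.Ji u) = g.Ji (mu *\<^sub>R u)" by (metis g.Ji_J)
      hence ev: "dual \<N> (g.Ji u) = csmult (of_real mu) (g.Ji u)"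
        by (simp add: g.Ji_scaleR csmult_of_real)
      have "g.Ji u \<noteq> 0" using un by (metis g.J_Ji linear_0[OF g.J_linear] norm_zero zero_neq_one)
      hence "cnj (of_real mu) \<in> spectrum_map \<N>" by (rule spec_dual[OF chN ev])
      hence "complex_of_real mu \<in> complex_of_real ` {0..1}" using assms(11) by auto
      thus ?thesis by auto
    qed
    have SupN: "Sup ((\<lambda>u. inner u (LN u) / (norm u)^2) ` (g.WW - {0})) = mu"
    proof (rule cSup_eq_maximum)
      show "mu \<in> (\<lambda>u. inner u (LN u) / (norm u)^2) ` (g.WW - {0})"
        using uW un by (intro image_eqI[of _ _ u]) (auto simp: mu_def)
    next
      fix x assume "x \<in> (\<lambda>u. inner u (LN u) / (norm u)^2) ` (g.WW - {0})"
      then obtain v where v: "v \<in> g.WW" "v \<noteq> 0" and x: "x = inner v (LN v) / (norm v)^2" by blast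
      show "x \<le> mu" unfolding x using umax[OF v(1)] v(2) by (simp add: divide_le_eq mu_def)
    qed
    have SupM: "Sup ((\<lambda>u. inner u (LM (LN (LM u))) / (norm u)^2) ` (g.WW - {0})) \<le> mu"
    proof (rule cSup_least)
      show "(\<lambda>u. inner u (LM (LN (LM u))) / (norm u)^2) ` (g.WW - {0}) \<noteq> {}" using False by blast
    next
      fix x assume "x \<in> (\<lambda>u. inner u (LM (LN (LM u))) / (norm u)^2) ` (g.WW - {0})"
      then obtain v where v: "v \<in> g.WW" "v \<noteq> 0" and x: "x = inner v (LM (LN (LM v))) / (norm v)^2" by blast
      have "inner v (LM (LN (LM v))) = inner (LM v) (LN (LM v))" by (simp add: symM)
      also have "\<dots> \<le> mu * (norm (LM v))^2" using umax[OF WM[OF v(1)]] by (simp add: mu_def)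
      also have "\<dots> \<le> mu * (norm v)^2"
        using contr[of v] mu_nonneg by (intro mult_left_mono power_mono) auto
      finally show "x \<le> mu" unfolding x using v(2) by (simp add: divide_le_eq)
    qed
    show ?thesis unfolding gapM gapN SupN using SupM by simp
  qed
qed

end
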